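(* Let $A$ be a commutative associative 0-dialgebra with involution over a field $\mathbb{F}$. On $A\oplus A$ define $(a,b)\dashv(c,d)=(a\dashv c-d\vdash b^\ast,\; a^\ast\dashv d+c\vdash b)$, $(a,b)\vdash(c,d)=(a\vdash c-d\dashv b^\ast,\; a^\ast\vdash d+c\dashv b)$ and $(a,b)^\ast=(a^\ast,-b)$. Then $A\oplus A$ with these operations is an associative 0-dialgebra with involution.
   Context: A 0-dialgebra is a vector space with bilinear operations $\dashv,\vdash$ satisfying $a\dashv(b\dashv c)=a\dashv(b\vdash c)$ and $(a\dashv b)\vdash c=(a\vdash b)\vdash c$. It is commutative if $a\dashv b=b\vdash a$ for all $a,b$. It is associative if $(a\dashv b)\dashv c=a\dashv(b\dashv c)$, $(a\vdash b)\dashv c=a\vdash(b\dashv c)$ and $(a\vdash b)\vdash c=a\vdash(b\vdash c)$ for all $a,b,c$. An involution is a linear map $\ast$ with $(a^\ast)^\ast=a$, $(a\dashv b)^\ast=b^\ast\vdash a^\ast$, $(a\vdash b)^\ast=b^\ast\dashv a^\ast$. *)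

theory Defs
  imports Complex_Main "HOL-Library.Product_Plus"
begin

text \<open>Operations: l = left product (dashv), r = right product (vdash), s = involution.\<close>

definition bilinear_op :: "('k::field \<Rightarrow> 'v::ab_group_add \<Rightarrow> 'v) \<Rightarrow> ('v \<Rightarrow> 'v \<Rightarrow> 'v) \<Rightarrow> bool" where
  "bilinear_op scl f \<longleftrightarrow>
     (\<forall>x. Vector_Spaces.linear scl scl (f x)) \<and> (\<forall>y. Vector_Spaces.linear scl scl (\<lambda>x. f x y))"

definition zero_dialgebra :: "('k::field \<Rightarrow> 'v::ab_group_add \<Rightarrow> 'v) \<Rightarrow> ('v \<Rightarrow> 'v \<Rightarrow> 'v) \<Rightarrow> ('v \<Rightarrow> 'v \<Rightarrow> 'v) \<Rightarrow> bool" where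
  "zero_dialgebra scl l r \<longleftrightarrow>
     vector_space scl \<and> bilinear_op scl l \<and> bilinear_op scl r \<and>
     (\<forall>a b c. l a (l b c) = l a (r b c)) \<and>
     (\<forall>a b c. r (l a b) c = r (r a b) c)"

definition commutative_dialgebra :: "('v \<Rightarrow> 'v \<Rightarrow> 'v) \<Rightarrow> ('v \<Rightarrow> 'v \<Rightarrow> 'v) \<Rightarrow> bool" where
  "commutative_dialgebra l r \<longleftrightarrow> (\<forall>a b. l a b = r b a)"

definition associative_dialgebra :: "('v \<Rightarrow> 'v \<Rightarrow> 'v) \<Rightarrow> ('v \<Rightarrow> 'v \<Rightarrow> 'v) \<Rightarrow> bool" where
  "associative_dialgebra l r \<longleftrightarrow>
     (\<forall>a b c. l (l a b) c = l a (l b c)) \<and>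
     (\<forall>a b c. l (r a b) c = r a (l b c)) \<and>
     (\<forall>a b c. r (r a b) c = r a (r b c))"

definition dialgebra_involution :: "('k::field \<Rightarrow> 'v::ab_group_add \<Rightarrow> 'v) \<Rightarrow> ('v \<Rightarrow> 'v \<Rightarrow> 'v) \<Rightarrow> ('v \<Rightarrow> 'v \<Rightarrow> 'v) \<Rightarrow> ('v \<Rightarrow> 'v) \<Rightarrow> bool" where
  "dialgebra_involution scl l r s \<longleftrightarrow>
     Vector_Spaces.linear scl scl s \<and>
     (\<forall>a. s (s a) = a) \<and>
     (\<forall>a b. s (l a b) = r (s b) (s a)) \<and>
     (\<forall>a b. s (r a b) = l (s b) (s a))"

definition dsum_scale :: "('k \<Rightarrow> 'v \<Rightarrow> 'v) \<Rightarrow> 'k \<Rightarrow> 'v \<times> 'v \<Rightarrow> 'v \<times> 'v" where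
  "dsum_scale scl c p = (scl c (fst p), scl c (snd p))"

definition dbl_l :: "('v::ab_group_add \<Rightarrow> 'v \<Rightarrow> 'v) \<Rightarrow> ('v \<Rightarrow> 'v \<Rightarrow> 'v) \<Rightarrow> ('v \<Rightarrow> 'v) \<Rightarrow> 'v \<times> 'v \<Rightarrow> 'v \<times> 'v \<Rightarrow> 'v \<times> 'v" where
  "dbl_l l r s p q = (case p of (a, b) \<Rightarrow> case q of (c, d) \<Rightarrow>
      (l a c - r d (s b), l (s a) d + r c b))"

definition dbl_r :: "('v::ab_group_add \<Rightarrow> 'v \<Rightarrow> 'v) \<Rightarrow> ('v \<Rightarrow> 'v \<Rightarrow> 'v) \<Rightarrow> ('v \<Rightarrow> 'v) \<Rightarrow> 'v \<times> 'v \<Rightarrow> 'v \<times> 'v \<Rightarrow> 'v \<times> 'v" where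
  "dbl_r l r s p q = (case p of (a, b) \<Rightarrow> case q of (c, d) \<Rightarrow>
      (r a c - l d (s b), r (s a) d + l c b))"

definition dbl_star :: "('v::ab_group_add \<Rightarrow> 'v) \<Rightarrow> 'v \<times> 'v \<Rightarrow> 'v \<times> 'v" where
  "dbl_star s p = (case p of (a, b) \<Rightarrow> (s a, - b))"

end

theory Submission
  imports Defs
begin

lemma additive_neg:
  fixes f :: "'v::ab_group_add \<Rightarrow> 'w::ab_group_add"
  assumes "\<And>x y. f (x + y) = f x + f y"
  shows "f (- x) = - f x"
proof -
  have "f 0 = 0" using assms[of 0 0] by simp
  moreover have "f (x + - x) = f x + f (- x)" by (rule assms)
  ultimately have "f x + f (- x) = 0" by simp
  from add.inverse_unique[OF this] show ?thesis by simp
qed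

theorem theorem4p2:
  fixes scl :: "'k::field \<Rightarrow> 'v::ab_group_add \<Rightarrow> 'v"
    and l r :: "'v \<Rightarrow> 'v \<Rightarrow> 'v"
    and s :: "'v \<Rightarrow> 'v"
  assumes "zero_dialgebra scl l r"
    and "commutative_dialgebra l r"
    and "associative_dialgebra l r"
    and "dialgebra_involution scl l r s"
  shows "zero_dialgebra (dsum_scale scl) (dbl_l l r s) (dbl_r l r s)
       \<and> associative_dialgebra (dbl_l l r s) (dbl_r l r s)
       \<and> dialgebra_involution (dsum_scale scl) (dbl_l l r s) (dbl_r l r s) (dbl_star s)"
proof -
  have vs: "vector_space scl" using assms(1) by (simp add: zero_dialgebra_def)
  have lin1: "\<And>x. Vector_Spaces.linear scl scl (l x)" and lin2: "\<And>y. Vector_Spaces.linear scl scl (\<lambda>x. l x y)"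
    using assms(1) by (auto simp: zero_dialgebra_def bilinear_op_def)
  have linS: "Vector_Spaces.linear scl scl s" using assms(4) by (simp add: dialgebra_involution_def)
  have rl: "\<And>a b. r a b = l b a" using assms(2) by (simp add: commutative_dialgebra_def)
  have la1: "\<And>x y z. l x (y + z) = l x y + l x z" and ls1: "\<And>x c y. l x (scl c y) = scl c (l x y)"
    using lin1 by (auto simp: Vector_Spaces.linear_iff)
  have la2: "\<And>x y z. l (y + z) x = l y x + l z x" and ls2: "\<And>x c y. l (scl c y) x = scl c (l y x)"
    using lin2 by (auto simp: Vector_Spaces.linear_iff)
  have sa: "\<And>x y. s (x + y) = s x + s y" and ss: "\<And>c x. s (scl c x) = scl c (s x)"
    using linS by (auto simp: Vector_Spaces.linear_iff)
  have ln1: "\<And>x y. l x (- y) = - l x y" by (rule additive_neg, rule la1)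
  have ln2: "\<And>x y. l (- y) x = - l y x" by (rule additive_neg[where f="\<lambda>y. l y x" for x], rule la2)
  have sn: "\<And>x. s (- x) = - s x" by (rule additive_neg, rule sa)
  have sca: "\<And>c x y. scl c (x + y) = scl c x + scl c y" using vs by (simp add: vector_space_def)
  have scn: "\<And>c x. scl c (- x) = - scl c x" by (rule additive_neg, rule sca)
  have ssid: "\<And>a. s (s a) = a" using assms(4) by (simp add: dialgebra_involution_def)
  have sl: "\<And>a b. s (l a b) = l (s a) (s b)" using assms(4) by (simp add: dialgebra_involution_def rl)
  have z1: "\<And>a b c. l a (l b c) = l a (l c b)" using assms(1) by (simp add: zero_dialgebra_def rl)
  have as1: "\<And>a b c. l a (l b c) = l (l a b) c" using assms(3) by (simp add: associative_dialgebra_def)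
  have perm: "l (l a b) c = l (l a c) b" for a b c
    using as1[of a b c] as1[of a c b] z1[of a b c] by simp
  have ld1: "\<And>x y z. l x (y - z) = l x y - l x z" by (simp only: diff_conv_add_uminus la1 ln1)
  have ld2: "\<And>x y z. l (y - z) x = l y x - l z x" by (simp only: diff_conv_add_uminus la2 ln2)
  have sd: "\<And>x y. s (x - y) = s x - s y" by (simp only: diff_conv_add_uminus sa sn)
  have scd: "\<And>c x y. scl c (x - y) = scl c x - scl c y" by (simp only: diff_conv_add_uminus sca scn)
  note N = rl la1 la2 ls1 ls2 sa ss ln1 ln2 sn sca scn ssid sl as1 perm ld1 ld2 sd scd
  have vs2: "vector_space (dsum_scale scl)"
    using vs by (simp add: vector_space_def dsum_scale_def)
  have P: "\<And>a b c d. (a,b) + (c,d) = (a + c, b + d)" by simp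
  note NP = N P dbl_l_def dbl_r_def dbl_star_def dsum_scale_def algebra_simps
  have linL: "\<And>x. Vector_Spaces.linear (dsum_scale scl) (dsum_scale scl) (dbl_l l r s x)"
    unfolding Vector_Spaces.linear_iff using vs2 by (auto simp: NP split: prod.splits)
  have linR: "\<And>x. Vector_Spaces.linear (dsum_scale scl) (dsum_scale scl) (dbl_r l r s x)"
    unfolding Vector_Spaces.linear_iff using vs2 by (auto simp: NP split: prod.splits)
  have linL2: "\<And>y. Vector_Spaces.linear (dsum_scale scl) (dsum_scale scl) (\<lambda>x. dbl_l l r s x y)"
    unfolding Vector_Spaces.linear_iff using vs2 by (auto simp: NP split: prod.splits)
  have linR2: "\<And>y. Vector_Spaces.linear (dsum_scale scl) (dsum_scale scl) (\<lambda>x. dbl_r l r s x y)"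
    unfolding Vector_Spaces.linear_iff using vs2 by (auto simp: NP split: prod.splits)
  have linS2: "Vector_Spaces.linear (dsum_scale scl) (dsum_scale scl) (dbl_star s)"
    unfolding Vector_Spaces.linear_iff using vs2 by (auto simp: NP split: prod.splits)
  have i1: "\<And>a. dbl_star s (dbl_star s a) = a" by (auto simp: NP split: prod.splits)
  have i2: "\<And>a b. dbl_star s (dbl_l l r s a b) = dbl_r l r s (dbl_star s b) (dbl_star s a)" by (simp only: split_paired_all) (simp add: NP)
  have i3: "\<And>a b. dbl_star s (dbl_r l r s a b) = dbl_l l r s (dbl_star s b) (dbl_star s a)" by (simp only: split_paired_all) (simp add: NP)
  have z1: "\<And>a b c. dbl_l l r s a (dbl_l l r s b c) = dbl_l l r s a (dbl_r l r s b c)" by (simp only: split_paired_all) (simp add: NP)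
  have z2: "\<And>a b c. dbl_r l r s (dbl_l l r s a b) c = dbl_r l r s (dbl_r l r s a b) c" by (simp only: split_paired_all) (simp add: NP)
  have a1: "\<And>a b c. dbl_l l r s (dbl_l l r s a b) c = dbl_l l r s a (dbl_l l r s b c)" by (simp only: split_paired_all) (simp add: NP)
  have a2: "\<And>a b c. dbl_l l r s (dbl_r l r s a b) c = dbl_r l r s a (dbl_l l r s b c)" by (simp only: split_paired_all) (simp add: NP)
  have a3: "\<And>a b c. dbl_r l r s (dbl_r l r s a b) c = dbl_r l r s a (dbl_r l r s b c)" by (simp only: split_paired_all) (simp add: NP)
  show ?thesis
    unfolding zero_dialgebra_def associative_dialgebra_def dialgebra_involution_def bilinear_op_def
    apply (intro conjI allI vs2 linL linR linL2 linR2 linS2)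
    apply (simp_all only: i1 i2 i3 z1 z2 a1 a2 a3)
    done
qed

end
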